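(* Let $P$ be a poset. (1) If $I$ is a non-empty index set and $\mathcal{U}_i$ is a frame-generating join-specification for $P$ for each $i\in I$, then $\bigcup_{i\in I}\mathcal{U}_i$ is frame-generating. (2) Even finite unions of maximal frame-generating join-specifications need not be maximal: there exist a poset $Q$ and maximal frame-generating join-specifications $\mathcal{U}_1,\mathcal{U}_2$ for $Q$ such that $\mathcal{U}_1\cup\mathcal{U}_2$ is not maximal. (3) If $I$ is a non-empty index set and $\mathcal{U}_i$ is a maximal frame-generating join-specification for $P$ for each $i\in I$, then $\bigcap_{i\in I}\mathcal{U}_i$ is a maximal frame-generating join-specification. (4) Even finite intersections of frame-generating join-specifications need not be frame-generating: there exist a poset $Q$ and frame-generating join-specifications $\mathcal{U}_1,\mathcal{U}_2$ for $Q$ such that $\mathcal{U}_1\cap\mathcal{U}_2$ is not frame-generating.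
   Context: A join-specification for a poset $P$ is a set $\mathcal{U}\subseteq\wp(P)$ such that $\bigvee S$ exists in $P$ for every $S\in\mathcal{U}$, and $\{p\}\in\mathcal{U}$ for every $p\in P$. A $\mathcal{U}$-ideal is a down-closed $C\subseteq P$ such that $\bigvee S\in C$ whenever $S\in\mathcal{U}$ and $S\subseteq C$. $\mathcal{I}_{\mathcal{U}}$ is the complete lattice of $\mathcal{U}$-ideals ordered by inclusion; $\Gamma_{\mathcal{U}}(S)$ is the smallest $\mathcal{U}$-ideal containing $S$. $\mathcal{U}^+=\{S\subseteq P:\bigvee S\text{ exists and }\bigvee S\in\Gamma_{\mathcal{U}}(S)\}$, and $\mathcal{U}$ is maximal if $\mathcal{U}=\mathcal{U}^+$. $\mathcal{U}$ is frame-generating if $\mathcal{I}_{\mathcal{U}}$ is a frame (a complete lattice satisfying $x\wedge\bigvee Y=\bigvee_{y\in Y}(x\wedge y)$). *)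

theory Defs
  imports Main
begin

text \<open>A poset is a carrier P with a relation r satisfying the library predicate
  partial_order_on P r; (x,y) \<in> r means x \<le> y.\<close>

definition is_lub :: "'a set \<Rightarrow> 'a rel \<Rightarrow> 'a set \<Rightarrow> 'a \<Rightarrow> bool" where
  "is_lub P r S x \<longleftrightarrow> x \<in> P \<and> (\<forall>s\<in>S. (s, x) \<in> r)
     \<and> (\<forall>y\<in>P. (\<forall>s\<in>S. (s, y) \<in> r) \<longrightarrow> (x, y) \<in> r)"

definition is_glb :: "'a set \<Rightarrow> 'a rel \<Rightarrow> 'a set \<Rightarrow> 'a \<Rightarrow> bool" where
  "is_glb P r S x \<longleftrightarrow> x \<in> P \<and> (\<forall>s\<in>S. (x, s) \<in> r)
     \<and> (\<forall>y\<in>P. (\<forall>s\<in>S. (y, s) \<in> r) \<longrightarrow> (y, x) \<in> r)"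

definition join_exists :: "'a set \<Rightarrow> 'a rel \<Rightarrow> 'a set \<Rightarrow> bool" where
  "join_exists P r S \<longleftrightarrow> (\<exists>x. is_lub P r S x)"

definition join :: "'a set \<Rightarrow> 'a rel \<Rightarrow> 'a set \<Rightarrow> 'a" where
  "join P r S = (THE x. is_lub P r S x)"

definition meet :: "'a set \<Rightarrow> 'a rel \<Rightarrow> 'a set \<Rightarrow> 'a" where
  "meet P r S = (THE x. is_glb P r S x)"

definition complete_lattice_on :: "'a set \<Rightarrow> 'a rel \<Rightarrow> bool" where
  "complete_lattice_on L r \<longleftrightarrow> partial_order_on L r \<and>
     (\<forall>Y\<subseteq>L. join_exists L r Y) \<and> (\<forall>Y\<subseteq>L. \<exists>x. is_glb L r Y x)"

definition frame_on :: "'a set \<Rightarrow> 'a rel \<Rightarrow> bool" where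
  "frame_on L r \<longleftrightarrow> complete_lattice_on L r \<and>
     (\<forall>x\<in>L. \<forall>Y\<subseteq>L. meet L r {x, join L r Y} = join L r ((\<lambda>y. meet L r {x, y}) ` Y))"

definition join_spec :: "'a set \<Rightarrow> 'a rel \<Rightarrow> 'a set set \<Rightarrow> bool" where
  "join_spec P r U \<longleftrightarrow> U \<subseteq> Pow P \<and> (\<forall>S\<in>U. join_exists P r S) \<and> (\<forall>p\<in>P. {p} \<in> U)"

definition U_ideal :: "'a set \<Rightarrow> 'a rel \<Rightarrow> 'a set set \<Rightarrow> 'a set \<Rightarrow> bool" where
  "U_ideal P r U C \<longleftrightarrow> C \<subseteq> P \<and> (\<forall>x\<in>C. \<forall>y\<in>P. (y, x) \<in> r \<longrightarrow> y \<in> C)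
     \<and> (\<forall>S\<in>U. S \<subseteq> C \<longrightarrow> join P r S \<in> C)"

definition U_ideals :: "'a set \<Rightarrow> 'a rel \<Rightarrow> 'a set set \<Rightarrow> 'a set set" where
  "U_ideals P r U = {C. U_ideal P r U C}"

definition inclusion :: "'b set set \<Rightarrow> 'b set rel" where
  "inclusion L = {(A, B). A \<in> L \<and> B \<in> L \<and> A \<subseteq> B}"

definition Gamma :: "'a set \<Rightarrow> 'a rel \<Rightarrow> 'a set set \<Rightarrow> 'a set \<Rightarrow> 'a set" where
  "Gamma P r U S = \<Inter>{C. U_ideal P r U C \<and> S \<subseteq> C}"

definition U_plus :: "'a set \<Rightarrow> 'a rel \<Rightarrow> 'a set set \<Rightarrow> 'a set set" where
  "U_plus P r U = {S. S \<subseteq> P \<and> join_exists P r S \<and> join P r S \<in> Gamma P r U S}"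

definition maximal_js :: "'a set \<Rightarrow> 'a rel \<Rightarrow> 'a set set \<Rightarrow> bool" where
  "maximal_js P r U \<longleftrightarrow> U = U_plus P r U"

definition frame_generating :: "'a set \<Rightarrow> 'a rel \<Rightarrow> 'a set set \<Rightarrow> bool" where
  "frame_generating P r U \<longleftrightarrow> frame_on (U_ideals P r U) (inclusion (U_ideals P r U))"

end

theory Submission imports Defs begin

lemma lub_unique: "antisym r \<Longrightarrow> is_lub P r S x \<Longrightarrow> join P r S = x"
  unfolding join_def
  by (rule the_equality) (auto simp: is_lub_def antisym_def)

lemma glb_unique: "antisym r \<Longrightarrow> is_glb P r S x \<Longrightarrow> meet P r S = x"
  unfolding meet_def
  by (rule the_equality) (auto simp: is_glb_def antisym_def)

lemma join_is_lub: "partial_order_on P r \<Longrightarrow> join_exists P r S \<Longrightarrow> is_lub P r S (join P r S)"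
  unfolding join_exists_def partial_order_on_def by (metis lub_unique)

lemma join_in_P: "partial_order_on P r \<Longrightarrow> join_exists P r S \<Longrightarrow> join P r S \<in> P"
  using join_is_lub is_lub_def by metis

lemma P_ideal: "partial_order_on P r \<Longrightarrow> join_spec P r U \<Longrightarrow> U_ideal P r U P"
  unfolding U_ideal_def join_spec_def using join_in_P by blast

lemma Gamma_sub: "X \<subseteq> Gamma P r U X"
  unfolding Gamma_def by blast

lemma Gamma_least: "U_ideal P r U C \<Longrightarrow> X \<subseteq> C \<Longrightarrow> Gamma P r U X \<subseteq> C"
  unfolding Gamma_def by (rule Inter_lower) simp

lemma U_ideal_anti: "U \<subseteq> V \<Longrightarrow> U_ideal P r V C \<Longrightarrow> U_ideal P r U C"
  unfolding U_ideal_def by (elim conjE) (intro conjI; blast)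

lemma Gamma_ideal:
  assumes "partial_order_on P r" "join_spec P r U" "X \<subseteq> P"
  shows "U_ideal P r U (Gamma P r U X)"
proof -
  have ne: "P \<in> {C. U_ideal P r U C \<and> X \<subseteq> C}" using P_ideal assms by blast
  show ?thesis unfolding U_ideal_def
  proof (intro conjI ballI impI)
    show "Gamma P r U X \<subseteq> P" using ne unfolding Gamma_def by (rule Inter_lower)
  next
    fix x y assume "x \<in> Gamma P r U X" "y \<in> P" "(y, x) \<in> r"
    then show "y \<in> Gamma P r U X" unfolding Gamma_def
    proof (intro InterI)
      fix C assume "x \<in> \<Inter>{C. U_ideal P r U C \<and> X \<subseteq> C}" "y \<in> P" "(y, x) \<in> r"
        and C: "C \<in> {C. U_ideal P r U C \<and> X \<subseteq> C}"
      then have "x \<in> C" by blast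
      then show "y \<in> C" using C \<open>y \<in> P\<close> \<open>(y, x) \<in> r\<close> unfolding U_ideal_def by blast
    qed
  next
    fix S assume "S \<in> U" "S \<subseteq> Gamma P r U X"
    then show "join P r S \<in> Gamma P r U X" unfolding Gamma_def
    proof (intro InterI)
      fix C assume "S \<in> U" "S \<subseteq> \<Inter>{C. U_ideal P r U C \<and> X \<subseteq> C}"
        and C: "C \<in> {C. U_ideal P r U C \<and> X \<subseteq> C}"
      then have "S \<subseteq> C" by blast
      then show "join P r S \<in> C" using C \<open>S \<in> U\<close> unfolding U_ideal_def by blast
    qed
  qed
qed

lemma Gamma_mono_U: "U \<subseteq> V \<Longrightarrow> Gamma P r U X \<subseteq> Gamma P r V X"
  unfolding Gamma_def by (rule Inter_anti_mono) (auto intro: U_ideal_anti)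

lemma Gamma_mono: "X \<subseteq> Y \<Longrightarrow> Gamma P r U X \<subseteq> Gamma P r U Y"
  unfolding Gamma_def by (rule Inter_anti_mono) auto

lemma Gamma_join:
  assumes "partial_order_on P r" "join_spec P r U" "X \<subseteq> P" "S \<in> U" "S \<subseteq> Gamma P r U X"
  shows "join P r S \<in> Gamma P r U X"
proof -
  have "\<forall>S\<in>U. S \<subseteq> Gamma P r U X \<longrightarrow> join P r S \<in> Gamma P r U X"
    using Gamma_ideal[OF assms(1-3)] unfolding U_ideal_def by (elim conjE)
  then show ?thesis using assms(4,5) by blast
qed

definition condC :: "'a set \<Rightarrow> 'a rel \<Rightarrow> 'a set set \<Rightarrow> bool" where
  "condC P r U \<longleftrightarrow> (\<forall>S\<in>U. \<forall>z\<in>P. (z, join P r S) \<in> r \<longrightarrow>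
      z \<in> Gamma P r U {t\<in>P. (t, z) \<in> r \<and> (\<exists>s\<in>S. (t, s) \<in> r)})"

definition downset :: "'a set \<Rightarrow> 'a rel \<Rightarrow> 'a set \<Rightarrow> bool" where
  "downset P r A \<longleftrightarrow> A \<subseteq> P \<and> (\<forall>x\<in>A. \<forall>y\<in>P. (y, x) \<in> r \<longrightarrow> y \<in> A)"

lemma condC_NP:
  assumes po: "partial_order_on P r" and js: "join_spec P r U" and C: "condC P r U"
    and A: "downset P r A" and D: "downset P r D"
  shows "A \<inter> Gamma P r U D \<subseteq> Gamma P r U (A \<inter> D)"
proof -
  define G where "G = Gamma P r U (A \<inter> D)"
  have AP: "A \<subseteq> P" and DP: "D \<subseteq> P" using A D unfolding downset_def by auto
  have Gi: "U_ideal P r U G" unfolding G_def using Gamma_ideal[OF po js] AP by blast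
  have trans: "trans r" using po unfolding partial_order_on_def preorder_on_def by blast
  have refl: "\<And>x. x \<in> P \<Longrightarrow> (x, x) \<in> r" using po unfolding partial_order_on_def preorder_on_def refl_on_def by blast
  define E where "E = {x\<in>P. \<forall>z\<in>P. (z, x) \<in> r \<and> z \<in> A \<longrightarrow> z \<in> G}"
  have Ei: "U_ideal P r U E" unfolding U_ideal_def
  proof (intro conjI ballI impI)
    show "E \<subseteq> P" unfolding E_def by blast
  next
    fix x y assume "x \<in> E" "y \<in> P" "(y, x) \<in> r"
    then show "y \<in> E" unfolding E_def using trans by (auto dest: transD)
  next
    fix S assume S: "S \<in> U" "S \<subseteq> E"
    have jP: "join P r S \<in> P" using js S join_in_P[OF po] unfolding join_spec_def by blast
    have "z \<in> G" if z: "z \<in> P" "(z, join P r S) \<in> r" "z \<in> A" for z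
    proof -
      let ?T = "{t\<in>P. (t, z) \<in> r \<and> (\<exists>s\<in>S. (t, s) \<in> r)}"
      have "z \<in> Gamma P r U ?T" using C S z unfolding condC_def by blast
      moreover have "?T \<subseteq> G"
      proof
        fix t assume t: "t \<in> ?T"
        then obtain s where s: "s \<in> S" "(t, s) \<in> r" by blast
        have "t \<in> A" using A t z unfolding downset_def by blast
        then show "t \<in> G" using s S t unfolding E_def by blast
      qed
      ultimately show ?thesis using Gamma_least[OF Gi] by blast
    qed
    then show "join P r S \<in> E" using jP unfolding E_def by blast
  qed
  have "D \<subseteq> E"
  proof
    fix x assume x: "x \<in> D"
    have "z \<in> G" if "z \<in> P" "(z, x) \<in> r" "z \<in> A" for z
    proof -
      have "z \<in> D" using D x that unfolding downset_def by blast
      then have "z \<in> A \<inter> D" using that by blast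
      then show ?thesis unfolding G_def by (rule subsetD[OF Gamma_sub])
    qed
    then show "x \<in> E" using x DP unfolding E_def by blast
  qed
  then have "Gamma P r U D \<subseteq> E" using Gamma_least[OF Ei] by blast
  then show ?thesis unfolding G_def[symmetric]
  proof (intro subsetI)
    fix x assume "Gamma P r U D \<subseteq> E" "x \<in> A \<inter> Gamma P r U D"
    then have "x \<in> E" "x \<in> A" by blast+
    then show "x \<in> G" using refl AP unfolding E_def by blast
  qed
qed

lemma inclusion_po: "partial_order_on L (inclusion L)"
  unfolding partial_order_on_def preorder_on_def refl_on_def trans_def antisym_def inclusion_def
  by auto

lemma inclusion_iff: "(A, B) \<in> inclusion L \<longleftrightarrow> A \<in> L \<and> B \<in> L \<and> A \<subseteq> B"
  by (simp add: inclusion_def)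

lemma antisym_inclusion: "antisym (inclusion L)"
  unfolding antisym_def inclusion_def by auto

lemma ideals_lub:
  assumes po: "partial_order_on P r" and js: "join_spec P r U" and Y: "Y \<subseteq> U_ideals P r U"
  shows "is_lub (U_ideals P r U) (inclusion (U_ideals P r U)) Y (Gamma P r U (\<Union>Y))"
proof -
  have sub: "\<Union>Y \<subseteq> P" using Y unfolding U_ideals_def U_ideal_def by blast
  have Gi: "Gamma P r U (\<Union>Y) \<in> U_ideals P r U" using Gamma_ideal[OF po js sub] unfolding U_ideals_def by blast
  have ub: "\<forall>s\<in>Y. (s, Gamma P r U (\<Union>Y)) \<in> inclusion (U_ideals P r U)"
    using Gi Y Gamma_sub[of "\<Union>Y" P r U] by (auto simp add: inclusion_iff)
  have le: "\<forall>c\<in>U_ideals P r U. (\<forall>s\<in>Y. (s, c) \<in> inclusion (U_ideals P r U))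
      \<longrightarrow> (Gamma P r U (\<Union>Y), c) \<in> inclusion (U_ideals P r U)"
  proof (intro ballI impI)
    fix c assume c: "c \<in> U_ideals P r U" and "\<forall>s\<in>Y. (s, c) \<in> inclusion (U_ideals P r U)"
    then have "\<Union>Y \<subseteq> c" by (auto simp add: inclusion_iff)
    moreover have "U_ideal P r U c" using c unfolding U_ideals_def by simp
    ultimately have "Gamma P r U (\<Union>Y) \<subseteq> c" using Gamma_least by metis
    then show "(Gamma P r U (\<Union>Y), c) \<in> inclusion (U_ideals P r U)"
      unfolding inclusion_iff using Gi c by (intro conjI)
  qed
  show ?thesis unfolding is_lub_def by (intro conjI Gi ub le)
qed

lemma ideals_glb:
  assumes po: "partial_order_on P r" and js: "join_spec P r U" and Y: "Y \<subseteq> U_ideals P r U"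
  shows "is_glb (U_ideals P r U) (inclusion (U_ideals P r U)) Y (P \<inter> \<Inter>Y)"
proof -
  have Pi: "U_ideal P r U P" using P_ideal[OF po js] .
  have Yi: "\<And>C. C \<in> Y \<Longrightarrow> U_ideal P r U C" using Y unfolding U_ideals_def by blast
  have "U_ideal P r U (P \<inter> \<Inter>Y)" unfolding U_ideal_def
  proof (intro conjI ballI impI)
    show "P \<inter> \<Inter>Y \<subseteq> P" by (rule Int_lower1)
  next
    fix x y assume x: "x \<in> P \<inter> \<Inter>Y" and y: "y \<in> P" "(y, x) \<in> r"
    have "y \<in> C" if "C \<in> Y" for C
    proof -
      have "x \<in> C" using x that by blast
      then show ?thesis using Yi[OF that] y unfolding U_ideal_def by blast
    qed
    then show "y \<in> P \<inter> \<Inter>Y" using y by blast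
  next
    fix S assume S: "S \<in> U" "S \<subseteq> P \<inter> \<Inter>Y"
    have "join P r S \<in> C" if "C \<in> Y" for C
    proof -
      have "S \<subseteq> C" using S that by blast
      then show ?thesis using Yi[OF that] S(1) unfolding U_ideal_def by blast
    qed
    moreover have "join P r S \<in> P" using Pi S unfolding U_ideal_def by blast
    ultimately show "join P r S \<in> P \<inter> \<Inter>Y" by blast
  qed
  then have Gi: "P \<inter> \<Inter>Y \<in> U_ideals P r U" unfolding U_ideals_def by simp
  have lb: "\<forall>s\<in>Y. (P \<inter> \<Inter>Y, s) \<in> inclusion (U_ideals P r U)"
  proof
    fix s assume "s \<in> Y"
    then have "s \<in> U_ideals P r U" "P \<inter> \<Inter>Y \<subseteq> s" using Y by blast+
    then show "(P \<inter> \<Inter>Y, s) \<in> inclusion (U_ideals P r U)" unfolding inclusion_iff using Gi by (intro conjI)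
  qed
  have ge: "\<forall>c\<in>U_ideals P r U. (\<forall>s\<in>Y. (c, s) \<in> inclusion (U_ideals P r U))
      \<longrightarrow> (c, P \<inter> \<Inter>Y) \<in> inclusion (U_ideals P r U)"
  proof (intro ballI impI)
    fix c assume c: "c \<in> U_ideals P r U" and h: "\<forall>s\<in>Y. (c, s) \<in> inclusion (U_ideals P r U)"
    have "c \<subseteq> s" if "s \<in> Y" for s using h that by (simp add: inclusion_iff)
    moreover have "c \<subseteq> P" using c unfolding U_ideals_def U_ideal_def by blast
    ultimately have "c \<subseteq> P \<inter> \<Inter>Y" by blast
    then show "(c, P \<inter> \<Inter>Y) \<in> inclusion (U_ideals P r U)" unfolding inclusion_iff using Gi c by (intro conjI)
  qed
  show ?thesis unfolding is_glb_def by (intro conjI Gi lb ge)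
qed

lemma ideals_join:
  assumes "partial_order_on P r" "join_spec P r U" "Y \<subseteq> U_ideals P r U"
  shows "join (U_ideals P r U) (inclusion (U_ideals P r U)) Y = Gamma P r U (\<Union>Y)"
  by (rule lub_unique[OF antisym_inclusion ideals_lub[OF assms]])

lemma ideals_meet:
  assumes "partial_order_on P r" "join_spec P r U" "x \<in> U_ideals P r U" "y \<in> U_ideals P r U"
  shows "meet (U_ideals P r U) (inclusion (U_ideals P r U)) {x, y} = x \<inter> y"
proof -
  have "meet (U_ideals P r U) (inclusion (U_ideals P r U)) {x, y} = P \<inter> \<Inter>{x,y}"
    by (rule glb_unique[OF antisym_inclusion ideals_glb[OF assms(1,2)]]) (use assms(3,4) in blast)
  also have "\<dots> = x \<inter> y" using assms(3) unfolding U_ideals_def U_ideal_def by blast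
  finally show ?thesis .
qed

lemma ideals_Int:
  assumes "partial_order_on P r" "join_spec P r U" "x \<in> U_ideals P r U" "y \<in> U_ideals P r U"
  shows "x \<inter> y \<in> U_ideals P r U"
proof -
  have "P \<inter> \<Inter>{x, y} \<in> U_ideals P r U"
    using ideals_glb[OF assms(1,2), of "{x,y}"] assms(3,4) unfolding is_glb_def by blast
  moreover have "P \<inter> \<Inter>{x, y} = x \<inter> y" using assms(3) unfolding U_ideals_def U_ideal_def by blast
  ultimately show ?thesis by simp
qed

lemma ideal_downset: "U_ideal P r U C \<Longrightarrow> downset P r C"
  unfolding U_ideal_def downset_def by blast

lemma condC_frame:
  assumes po: "partial_order_on P r" and js: "join_spec P r U" and C: "condC P r U"
  shows "frame_generating P r U"
  unfolding frame_generating_def frame_on_def complete_lattice_on_def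
proof (intro conjI ballI allI impI)
  let ?L = "U_ideals P r U"
  show "partial_order_on ?L (inclusion ?L)" by (rule inclusion_po)
  show "join_exists ?L (inclusion ?L) Y" if "Y \<subseteq> ?L" for Y
    using ideals_lub[OF po js that] unfolding join_exists_def by blast
  show "\<exists>x. is_glb ?L (inclusion ?L) Y x" if "Y \<subseteq> ?L" for Y
    using ideals_glb[OF po js that] by blast
  fix x Y assume x: "x \<in> ?L" and Y: "Y \<subseteq> ?L"
  have sub: "\<Union>Y \<subseteq> P" using Y unfolding U_ideals_def U_ideal_def by blast
  have Gi: "Gamma P r U (\<Union>Y) \<in> ?L" using Gamma_ideal[OF po js sub] unfolding U_ideals_def by blast
  have im: "(\<lambda>y. meet ?L (inclusion ?L) {x, y}) ` Y = (\<lambda>y. x \<inter> y) ` Y"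
    using ideals_meet[OF po js x] Y by auto
  have im2: "(\<lambda>y. x \<inter> y) ` Y \<subseteq> ?L"
  proof
    fix z assume "z \<in> (\<lambda>y. x \<inter> y) ` Y"
    then obtain y where "y \<in> Y" "z = x \<inter> y" by blast
    then show "z \<in> ?L" using ideals_Int[OF po js x, of y] Y by blast
  qed
  have eq: "\<Union>((\<lambda>y. x \<inter> y) ` Y) = x \<inter> \<Union>Y" by blast
  have xd: "downset P r x" using x ideal_downset unfolding U_ideals_def by blast
  have Yd: "downset P r (\<Union>Y)" using Y unfolding U_ideals_def U_ideal_def downset_def by blast
  have "x \<inter> Gamma P r U (\<Union>Y) = Gamma P r U (x \<inter> \<Union>Y)"
  proof
    show "x \<inter> Gamma P r U (\<Union>Y) \<subseteq> Gamma P r U (x \<inter> \<Union>Y)" using condC_NP[OF po js C xd Yd] .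
    show "Gamma P r U (x \<inter> \<Union>Y) \<subseteq> x \<inter> Gamma P r U (\<Union>Y)"
      using Gamma_least[of P r U x "x \<inter> \<Union>Y"] x Gamma_mono[of "x \<inter> \<Union>Y" "\<Union>Y" P r U]
      unfolding U_ideals_def by blast
  qed
  then show "meet ?L (inclusion ?L) {x, join ?L (inclusion ?L) Y} =
      join ?L (inclusion ?L) ((\<lambda>y. meet ?L (inclusion ?L) {x, y}) ` Y)"
    using ideals_join[OF po js Y] ideals_join[OF po js im2] ideals_meet[OF po js x Gi] im eq
    by simp
qed

lemma frame_condC:
  assumes po: "partial_order_on P r" and js: "join_spec P r U" and F: "frame_generating P r U"
  shows "condC P r U"
  unfolding condC_def
proof (intro ballI impI)
  let ?L = "U_ideals P r U"
  fix S z assume S: "S \<in> U" and z: "z \<in> P" and zle: "(z, join P r S) \<in> r"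
  have trans: "trans r" using po unfolding partial_order_on_def preorder_on_def by blast
  have SP: "S \<subseteq> P" using js S unfolding join_spec_def by blast
  define dn where "dn = (\<lambda>p. {t\<in>P. (t, p) \<in> r})"
  have dnL: "dn p \<in> ?L" if p: "p \<in> P" for p
  proof -
    have "U_ideal P r U (dn p)" unfolding U_ideal_def
    proof (intro conjI ballI impI)
      show "dn p \<subseteq> P" unfolding dn_def by blast
    next
      fix x y assume "x \<in> dn p" "y \<in> P" "(y, x) \<in> r"
      then show "y \<in> dn p" unfolding dn_def using trans by (auto dest: transD)
    next
      fix S' assume S': "S' \<in> U" "S' \<subseteq> dn p"
      then have je: "join_exists P r S'" using js unfolding join_spec_def by blast
      have lub: "is_lub P r S' (join P r S')" using join_is_lub[OF po je] .
      have "\<forall>s\<in>S'. (s, p) \<in> r" using S' unfolding dn_def by blast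
      then have "(join P r S', p) \<in> r" "join P r S' \<in> P" using lub p unfolding is_lub_def by blast+
      then show "join P r S' \<in> dn p" unfolding dn_def by blast
    qed
    then show ?thesis unfolding U_ideals_def by simp
  qed
  define Y where "Y = dn ` S"
  have Y: "Y \<subseteq> ?L" using dnL SP unfolding Y_def by blast
  have x: "dn z \<in> ?L" using dnL z .
  have Gi: "Gamma P r U (\<Union>Y) \<in> ?L" using ideals_lub[OF po js Y] unfolding is_lub_def by blast
  have im: "(\<lambda>y. meet ?L (inclusion ?L) {dn z, y}) ` Y = (\<lambda>y. dn z \<inter> y) ` Y"
    using ideals_meet[OF po js x] Y by auto
  have im2: "(\<lambda>y. dn z \<inter> y) ` Y \<subseteq> ?L"
  proof
    fix w assume "w \<in> (\<lambda>y. dn z \<inter> y) ` Y"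
    then obtain y where "y \<in> Y" "w = dn z \<inter> y" by blast
    then show "w \<in> ?L" using ideals_Int[OF po js x, of y] Y by blast
  qed
  have refl: "\<And>x. x \<in> P \<Longrightarrow> (x, x) \<in> r" using po unfolding partial_order_on_def preorder_on_def refl_on_def by blast
  have "S \<subseteq> \<Union>Y"
  proof
    fix s assume s: "s \<in> S"
    then have "s \<in> dn s" unfolding dn_def using SP refl by blast
    moreover have "dn s \<in> Y" unfolding Y_def using s by (rule imageI)
    ultimately show "s \<in> \<Union>Y" by (rule UnionI[rotated])
  qed
  then have SG: "S \<subseteq> Gamma P r U (\<Union>Y)" by (rule subset_trans[OF _ Gamma_sub])
  have UYP: "\<Union>Y \<subseteq> P" unfolding Y_def dn_def by blast
  have "join P r S \<in> Gamma P r U (\<Union>Y)" by (rule Gamma_join[OF po js UYP S SG])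
  moreover have GU: "U_ideal P r U (Gamma P r U (\<Union>Y))" using Gi unfolding U_ideals_def by simp
  ultimately have "z \<in> Gamma P r U (\<Union>Y)" using z zle unfolding U_ideal_def by blast
  moreover have "z \<in> dn z" using z refl unfolding dn_def by blast
  ultimately have "z \<in> dn z \<inter> Gamma P r U (\<Union>Y)" by (rule IntI[rotated])
  also have "dn z \<inter> Gamma P r U (\<Union>Y) = meet ?L (inclusion ?L) {dn z, join ?L (inclusion ?L) Y}"
    using ideals_join[OF po js Y] ideals_meet[OF po js x Gi] by simp
  also have "\<dots> = join ?L (inclusion ?L) ((\<lambda>y. dn z \<inter> y) ` Y)"
    using F x Y im unfolding frame_generating_def frame_on_def by auto
  also have "\<dots> = Gamma P r U (\<Union>((\<lambda>y. dn z \<inter> y) ` Y))" using ideals_join[OF po js im2] .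
  also have "\<Union>((\<lambda>y. dn z \<inter> y) ` Y) = {t\<in>P. (t, z) \<in> r \<and> (\<exists>s\<in>S. (t, s) \<in> r)}"
    unfolding Y_def dn_def by blast
  finally show "z \<in> Gamma P r U {t\<in>P. (t, z) \<in> r \<and> (\<exists>s\<in>S. (t, s) \<in> r)}" .
qed

lemma frame_iff_condC:
  "partial_order_on P r \<Longrightarrow> join_spec P r U \<Longrightarrow> frame_generating P r U \<longleftrightarrow> condC P r U"
  using frame_condC condC_frame by blast


lemma dn_ideal:
  assumes po: "partial_order_on P r" and js: "join_spec P r U" and p: "p \<in> P"
  shows "U_ideal P r U {t\<in>P. (t, p) \<in> r}"
proof -
  have trans: "trans r" using po unfolding partial_order_on_def preorder_on_def by blast
  show ?thesis unfolding U_ideal_def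
  proof (intro conjI ballI impI)
    show "{t\<in>P. (t, p) \<in> r} \<subseteq> P" by blast
  next
    fix x y assume "x \<in> {t\<in>P. (t, p) \<in> r}" "y \<in> P" "(y, x) \<in> r"
    then show "y \<in> {t\<in>P. (t, p) \<in> r}" using trans by (auto dest: transD)
  next
    fix S' assume S': "S' \<in> U" "S' \<subseteq> {t\<in>P. (t, p) \<in> r}"
    then have je: "join_exists P r S'" using js unfolding join_spec_def by blast
    have lub: "is_lub P r S' (join P r S')" using join_is_lub[OF po je] .
    have "\<forall>s\<in>S'. (s, p) \<in> r" using S' by blast
    then have "(join P r S', p) \<in> r" "join P r S' \<in> P" using lub p unfolding is_lub_def by blast+
    then show "join P r S' \<in> {t\<in>P. (t, p) \<in> r}" by blast
  qed
qed

lemma Gamma_sub_P: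
  assumes "partial_order_on P r" "join_spec P r U" "X \<subseteq> P"
  shows "Gamma P r U X \<subseteq> P"
  using Gamma_ideal[OF assms] unfolding U_ideal_def by blast

lemma gamma_lub:
  assumes po: "partial_order_on P r" and js: "join_spec P r U" and T: "T \<subseteq> P"
    and z: "z \<in> Gamma P r U T" and ub: "\<forall>t\<in>T. (t, z) \<in> r"
  shows "is_lub P r T z"
proof -
  have zP: "z \<in> P" using Gamma_sub_P[OF po js T] z by blast
  have "(z, y) \<in> r" if y: "y \<in> P" "\<forall>t\<in>T. (t, y) \<in> r" for y
  proof -
    have "T \<subseteq> {t\<in>P. (t, y) \<in> r}" using T y by blast
    then have "Gamma P r U T \<subseteq> {t\<in>P. (t, y) \<in> r}" by (rule Gamma_least[OF dn_ideal[OF po js y(1)]])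
    then show ?thesis using z by blast
  qed
  then show ?thesis unfolding is_lub_def using zP ub by blast
qed

lemma U_sub_plus:
  assumes po: "partial_order_on P r" and js: "join_spec P r U"
  shows "U \<subseteq> U_plus P r U"
proof
  fix S assume S: "S \<in> U"
  have SP: "S \<subseteq> P" and je: "join_exists P r S" using js S unfolding join_spec_def by blast+
  have "join P r S \<in> Gamma P r U S" by (rule Gamma_join[OF po js SP S Gamma_sub])
  then show "S \<in> U_plus P r U" unfolding U_plus_def using SP je by blast
qed

lemma plus_ideal_iff:
  assumes po: "partial_order_on P r" and js: "join_spec P r U"
  shows "U_ideal P r (U_plus P r U) C \<longleftrightarrow> U_ideal P r U C"
proof
  assume "U_ideal P r (U_plus P r U) C"
  then show "U_ideal P r U C" by (rule U_ideal_anti[OF U_sub_plus[OF po js]])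
next
  assume C: "U_ideal P r U C"
  have "join P r S \<in> C" if S: "S \<in> U_plus P r U" "S \<subseteq> C" for S
  proof -
    have "join P r S \<in> Gamma P r U S" using S unfolding U_plus_def by blast
    moreover have "Gamma P r U S \<subseteq> C" by (rule Gamma_least[OF C S(2)])
    ultimately show ?thesis by blast
  qed
  then show "U_ideal P r (U_plus P r U) C" using C unfolding U_ideal_def by blast
qed

lemma Gamma_plus:
  assumes "partial_order_on P r" "join_spec P r U"
  shows "Gamma P r (U_plus P r U) X = Gamma P r U X"
  unfolding Gamma_def using plus_ideal_iff[OF assms] by simp

lemma U_plus_idem:
  assumes "partial_order_on P r" "join_spec P r U"
  shows "U_plus P r (U_plus P r U) = U_plus P r U"
  apply (subst U_plus_def[of P r "U_plus P r U"])
  apply (simp only: Gamma_plus[OF assms])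
  apply (simp add: U_plus_def)
  done

lemma plus_join_spec:
  assumes po: "partial_order_on P r" and js: "join_spec P r U"
  shows "join_spec P r (U_plus P r U)"
  using U_sub_plus[OF po js] js unfolding join_spec_def U_plus_def by blast

lemma plus_maximal:
  assumes "partial_order_on P r" "join_spec P r U"
  shows "maximal_js P r (U_plus P r U)"
  unfolding maximal_js_def using U_plus_idem[OF assms] by simp

lemma plus_fg:
  assumes "partial_order_on P r" "join_spec P r U"
  shows "frame_generating P r (U_plus P r U) \<longleftrightarrow> frame_generating P r U"
proof -
  have "U_ideals P r (U_plus P r U) = U_ideals P r U"
    unfolding U_ideals_def using plus_ideal_iff[OF assms] by blast
  then show ?thesis unfolding frame_generating_def by simp
qed

lemma part1:
  assumes po: "partial_order_on P r" and I: "I \<noteq> {}"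
    and H: "\<forall>i\<in>I. join_spec P r (Us i) \<and> frame_generating P r (Us i)"
  shows "join_spec P r (\<Union>i\<in>I. Us i) \<and> frame_generating P r (\<Union>i\<in>I. Us i)"
proof -
  have js: "join_spec P r (\<Union>i\<in>I. Us i)"
    using H I unfolding join_spec_def by blast
  have C: "condC P r (Us i)" if "i \<in> I" for i using frame_condC[OF po] H that by blast
  have "condC P r (\<Union>i\<in>I. Us i)" unfolding condC_def
  proof (intro ballI impI)
    fix S z assume S: "S \<in> (\<Union>i\<in>I. Us i)" and z: "z \<in> P" "(z, join P r S) \<in> r"
    then obtain i where i: "i \<in> I" "S \<in> Us i" by blast
    then have "z \<in> Gamma P r (Us i) {t\<in>P. (t, z) \<in> r \<and> (\<exists>s\<in>S. (t, s) \<in> r)}"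
      using C[OF i(1)] z unfolding condC_def by blast
    moreover have "Us i \<subseteq> (\<Union>i\<in>I. Us i)" using i by blast
    ultimately show "z \<in> Gamma P r (\<Union>i\<in>I. Us i) {t\<in>P. (t, z) \<in> r \<and> (\<exists>s\<in>S. (t, s) \<in> r)}"
      using Gamma_mono_U by blast
  qed
  then show ?thesis using js condC_frame[OF po js] by blast
qed

lemma part3:
  assumes po: "partial_order_on P r" and I: "I \<noteq> {}"
    and H: "\<forall>i\<in>I. join_spec P r (Us i) \<and> maximal_js P r (Us i) \<and> frame_generating P r (Us i)"
  shows "join_spec P r (\<Inter>i\<in>I. Us i) \<and> maximal_js P r (\<Inter>i\<in>I. Us i)
              \<and> frame_generating P r (\<Inter>i\<in>I. Us i)"
proof -
  obtain i0 where i0: "i0 \<in> I" using I by blast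
  let ?W = "\<Inter>i\<in>I. Us i"
  have jsi: "join_spec P r (Us i)" if "i \<in> I" for i using H that by blast
  have mi: "U_plus P r (Us i) = Us i" if "i \<in> I" for i using H that unfolding maximal_js_def by metis
  have js0: "join_spec P r (Us i0)" using jsi[OF i0] .
  have W0: "?W \<subseteq> Us i0" using i0 by blast
  have sing: "{p} \<in> ?W" if "p \<in> P" for p
  proof -
    have "{p} \<in> Us i" if "i \<in> I" for i using jsi[OF that] \<open>p \<in> P\<close> unfolding join_spec_def by blast
    then show ?thesis by blast
  qed
  have js: "join_spec P r ?W"
    unfolding join_spec_def
  proof (intro conjI ballI)
    show "?W \<subseteq> Pow P" using W0 js0 unfolding join_spec_def by blast
    show "join_exists P r S" if "S \<in> ?W" for S using W0 js0 that unfolding join_spec_def by blast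
    show "{p} \<in> ?W" if "p \<in> P" for p using sing that .
  qed
  have Ci: "condC P r (Us i)" if "i \<in> I" for i using frame_condC[OF po] H that by blast
  have Wsub: "?W \<subseteq> Us i" if "i \<in> I" for i using that by blast
  have "U_plus P r ?W \<subseteq> ?W"
  proof
    fix S assume S: "S \<in> U_plus P r ?W"
    have "S \<in> Us i" if i: "i \<in> I" for i
    proof -
      have "Gamma P r ?W S \<subseteq> Gamma P r (Us i) S" by (rule Gamma_mono_U[OF Wsub[OF i]])
      then have "S \<in> U_plus P r (Us i)" using S unfolding U_plus_def by blast
      then show ?thesis using mi[OF i] by simp
    qed
    then show "S \<in> ?W" by blast
  qed
  then have max: "maximal_js P r ?W" unfolding maximal_js_def using U_sub_plus[OF po js] by blast
  have "condC P r ?W" unfolding condC_def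
  proof (intro ballI impI)
    fix S z assume S: "S \<in> ?W" and z: "z \<in> P" "(z, join P r S) \<in> r"
    define T where "T = {t\<in>P. (t, z) \<in> r \<and> (\<exists>s\<in>S. (t, s) \<in> r)}"
    have TP: "T \<subseteq> P" unfolding T_def by blast
    have ub: "\<forall>t\<in>T. (t, z) \<in> r" unfolding T_def by blast
    have zG: "z \<in> Gamma P r (Us i) T" if i: "i \<in> I" for i
      using Ci[OF i] S z i unfolding condC_def T_def by blast
    have lub: "is_lub P r T z" by (rule gamma_lub[OF po jsi[OF i0] TP zG[OF i0] ub])
    have jT: "join P r T = z"
      using po lub unfolding partial_order_on_def by (metis lub_unique)
    have "T \<in> Us i" if i: "i \<in> I" for i
    proof -
      have "T \<in> U_plus P r (Us i)" unfolding U_plus_def join_exists_def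
        using TP lub zG[OF i] jT by blast
      then show ?thesis using mi[OF i] by simp
    qed
    then have TW: "T \<in> ?W" by blast
    have "join P r T \<in> Gamma P r ?W T" by (rule Gamma_join[OF po js TP TW Gamma_sub])
    then show "z \<in> Gamma P r ?W {t\<in>P. (t, z) \<in> r \<and> (\<exists>s\<in>S. (t, s) \<in> r)}"
      using jT unfolding T_def by simp
  qed
  then show ?thesis using js max condC_frame[OF po js] by blast
qed


lemma in_T_Gamma:
  "z \<in> P \<Longrightarrow> s \<in> S \<Longrightarrow> (z, s) \<in> r \<Longrightarrow> (z, z) \<in> r \<Longrightarrow>
    z \<in> Gamma P r U {t\<in>P. (t, z) \<in> r \<and> (\<exists>s\<in>S. (t, s) \<in> r)}"
  by (rule subsetD[OF Gamma_sub]) blast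

lemma condC_suff:
  assumes po: "partial_order_on P r" and js: "join_spec P r U"
    and H: "\<forall>S\<in>U. \<forall>z\<in>P. (z, join P r S) \<in> r \<longrightarrow> (\<exists>s\<in>S. (z, s) \<in> r) \<or>
       (\<exists>S'\<in>U. S' \<subseteq> {t\<in>P. (t, z) \<in> r \<and> (\<exists>s\<in>S. (t, s) \<in> r)} \<and> join P r S' = z)"
  shows "condC P r U"
  unfolding condC_def
proof (intro ballI impI)
  fix S z assume S: "S \<in> U" and z: "z \<in> P" "(z, join P r S) \<in> r"
  have refl: "(z, z) \<in> r" using po z unfolding partial_order_on_def preorder_on_def refl_on_def by blast
  let ?T = "{t\<in>P. (t, z) \<in> r \<and> (\<exists>s\<in>S. (t, s) \<in> r)}"
  from H S z consider (a) s where "s \<in> S" "(z, s) \<in> r" | (b) S' where "S' \<in> U" "S' \<subseteq> ?T" "join P r S' = z"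
    by blast
  then show "z \<in> Gamma P r U ?T"
  proof cases
    case a
    then show ?thesis using in_T_Gamma[OF z(1) _ _ refl] by blast
  next
    case b
    have TP: "?T \<subseteq> P" by blast
    have "join P r S' \<in> Gamma P r U ?T"
      by (rule Gamma_join[OF po js TP b(1) subset_trans[OF b(2) Gamma_sub]])
    then show ?thesis using b(3) by simp
  qed
qed

lemma join_single: "partial_order_on P r \<Longrightarrow> p \<in> P \<Longrightarrow> join P r {p} = p"
  apply (rule lub_unique)
   apply (simp add: partial_order_on_def)
  apply (simp add: is_lub_def partial_order_on_def preorder_on_def refl_on_def)
  done

definition Q4 :: "nat set" where "Q4 = {0,1,2,3,4,5,6}"
definition r4 :: "nat rel" where "r4 = {(0,0),(1,1),(2,2),(3,3),(4,4),(5,5),(6,6),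
  (0,1),(0,2),(0,3),(0,4),(0,5),(0,6),(1,3),(1,5),(1,6),(2,4),(2,5),(2,6),(3,6),(4,6),(5,6)}"

lemma po4: "partial_order_on Q4 r4"
  unfolding partial_order_on_def preorder_on_def refl_on_def trans_def antisym_def Q4_def r4_def
  by auto

lemma lub_join: "partial_order_on P r \<Longrightarrow> is_lub P r S x \<Longrightarrow> join P r S = x"
  by (rule lub_unique) (simp_all add: partial_order_on_def)

lemma l4_34: "is_lub Q4 r4 {3,4} 6" by (simp add: is_lub_def Q4_def r4_def)
lemma l4_12: "is_lub Q4 r4 {1,2} 5" by (simp add: is_lub_def Q4_def r4_def)
lemma l4_012: "is_lub Q4 r4 {0,1,2} 5" by (simp add: is_lub_def Q4_def r4_def)
lemma j4_34: "join Q4 r4 {3,4} = 6" by (rule lub_join[OF po4 l4_34])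
lemma j4_12: "join Q4 r4 {1,2} = 5" by (rule lub_join[OF po4 l4_12])
lemma j4_012: "join Q4 r4 {0,1,2} = 5" by (rule lub_join[OF po4 l4_012])

lemma single_lub: "partial_order_on P r \<Longrightarrow> p \<in> P \<Longrightarrow> is_lub P r {p} p"
  by (simp add: is_lub_def partial_order_on_def preorder_on_def refl_on_def)

definition U41 :: "nat set set" where "U41 = {{0},{1},{2},{3},{4},{5},{6},{3,4},{1,2}}"
definition U42 :: "nat set set" where "U42 = {{0},{1},{2},{3},{4},{5},{6},{3,4},{0,1,2}}"

lemma js41: "join_spec Q4 r4 U41"
  unfolding join_spec_def join_exists_def
proof (intro conjI ballI)
  show "U41 \<subseteq> Pow Q4" by (simp add: U41_def Q4_def)
  fix S assume "S \<in> U41"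
  then show "\<exists>x. is_lub Q4 r4 S x" unfolding U41_def
    apply (elim insertE emptyE)
    apply (hypsubst, rule exI, rule single_lub[OF po4], simp add: Q4_def)+
    apply (hypsubst, rule exI, rule l4_34)
    apply (hypsubst, rule exI, rule l4_12)
    done
next
  fix p assume "p \<in> Q4" then show "{p} \<in> U41" by (auto simp: U41_def Q4_def)
qed

lemma js42: "join_spec Q4 r4 U42"
  unfolding join_spec_def join_exists_def
proof (intro conjI ballI)
  show "U42 \<subseteq> Pow Q4" by (simp add: U42_def Q4_def)
  fix S assume "S \<in> U42"
  then show "\<exists>x. is_lub Q4 r4 S x" unfolding U42_def
    apply (elim insertE emptyE)
    apply (hypsubst, rule exI, rule single_lub[OF po4], simp add: Q4_def)+
    apply (hypsubst, rule exI, rule l4_34)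
    apply (hypsubst, rule exI, rule l4_012)
    done
next
  fix p assume "p \<in> Q4" then show "{p} \<in> U42" by (auto simp: U42_def Q4_def)
qed

lemma q4mem: "0 \<in> Q4" "1 \<in> Q4" "2 \<in> Q4" "3 \<in> Q4" "4 \<in> Q4" "5 \<in> Q4" "6 \<in> Q4"
  by (simp_all add: Q4_def)

lemma C41: "condC Q4 r4 U41"
  apply (rule condC_suff[OF po4 js41])
  apply (simp only: U41_def j4_34 j4_12 join_single[OF po4] q4mem ball_simps bex_simps)
  apply (simp add: Q4_def r4_def)
  done

lemma C42: "condC Q4 r4 U42"
  apply (rule condC_suff[OF po4 js42])
  apply (simp only: U42_def j4_34 j4_012 join_single[OF po4] q4mem ball_simps bex_simps)
  apply (simp add: Q4_def r4_def)
  done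

lemma neq4: "{Suc 0, 2::nat} \<noteq> {3,4}" "{Suc 0, 2::nat} \<noteq> {0, Suc 0, 2}"
  by (auto simp: set_eq_iff)

lemma q4one: "Suc 0 \<in> Q4" by (simp add: Q4_def)

lemma notC4: "\<not> condC Q4 r4 (U41 \<inter> U42)"
proof
  assume C: "condC Q4 r4 (U41 \<inter> U42)"
  let ?W = "U41 \<inter> U42"
  let ?T = "{t\<in>Q4. (t, 5) \<in> r4 \<and> (\<exists>s\<in>{3,4}. (t, s) \<in> r4)}"
  have S: "{3,4} \<in> ?W" by (simp add: U41_def U42_def)
  have "(5, join Q4 r4 {3,4}) \<in> r4" unfolding j4_34 by (simp add: r4_def)
  then have z: "5 \<in> Gamma Q4 r4 ?W ?T" using C S q4mem unfolding condC_def by blast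
  have id: "U_ideal Q4 r4 ?W {0,1,2}" unfolding U_ideal_def
  proof (intro conjI ballI impI)
    show "{0,1,2} \<subseteq> Q4" by (simp add: Q4_def)
    fix x y assume "x \<in> {0::nat,1,2}" "y \<in> Q4" "(y, x) \<in> r4"
    then show "y \<in> {0,1,2}" by (auto simp: Q4_def r4_def)
  next
    fix S assume S: "S \<in> ?W" "S \<subseteq> {0::nat,1,2}"
    have "S \<in> U41" "S \<in> U42" using S by blast+
    then show "join Q4 r4 S \<in> {0,1,2}" using S(2) unfolding U41_def
      apply (elim insertE emptyE)
      apply (simp_all add: join_single[OF po4] q4mem q4one U42_def neq4)
      done
  qed
  have "?T \<subseteq> {0,1,2}" by (auto simp: Q4_def r4_def)
  then have "Gamma Q4 r4 ?W ?T \<subseteq> {0,1,2}" by (rule Gamma_least[OF id])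
  then show False using z by auto
qed

lemma js_Un: "join_spec P r U \<Longrightarrow> join_spec P r V \<Longrightarrow> join_spec P r (U \<union> V)"
  unfolding join_spec_def by blast

lemma js_Int: "join_spec P r U \<Longrightarrow> join_spec P r V \<Longrightarrow> join_spec P r (U \<inter> V)"
  unfolding join_spec_def by blast

definition Q2 :: "nat set" where "Q2 = {0,1,2,3,4}"
definition r2 :: "nat rel" where "r2 = {(0,0),(1,1),(2,2),(3,3),(4,4),(0,3),(1,3),(0,4),(1,4),(3,4),(2,4)}"
definition Ua :: "nat set set" where "Ua = {{0},{1},{2},{3},{4},{0,1}}"
definition Ub :: "nat set set" where "Ub = {{0},{1},{2},{3},{4},{3,2}}"

lemma po2: "partial_order_on Q2 r2"
  unfolding partial_order_on_def preorder_on_def refl_on_def trans_def antisym_def Q2_def r2_def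
  by auto

lemma l2_01: "is_lub Q2 r2 {0,1} 3" by (simp add: is_lub_def Q2_def r2_def)
lemma l2_32: "is_lub Q2 r2 {3,2} 4" by (simp add: is_lub_def Q2_def r2_def)
lemma l2_012: "is_lub Q2 r2 {0,1,2} 4" by (simp add: is_lub_def Q2_def r2_def)
lemma j2_01: "join Q2 r2 {0,1} = 3" by (rule lub_join[OF po2 l2_01])
lemma j2_32: "join Q2 r2 {3,2} = 4" by (rule lub_join[OF po2 l2_32])
lemma j2_012: "join Q2 r2 {0,1,2} = 4" by (rule lub_join[OF po2 l2_012])
lemma q2mem: "0 \<in> Q2" "1 \<in> Q2" "2 \<in> Q2" "3 \<in> Q2" "4 \<in> Q2" "Suc 0 \<in> Q2"
  by (simp_all add: Q2_def)

lemma jsa: "join_spec Q2 r2 Ua"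
  unfolding join_spec_def join_exists_def
proof (intro conjI ballI)
  show "Ua \<subseteq> Pow Q2" by (simp add: Ua_def Q2_def)
  fix S assume "S \<in> Ua"
  then show "\<exists>x. is_lub Q2 r2 S x" unfolding Ua_def
    apply (elim insertE emptyE)
    apply (hypsubst, rule exI, rule single_lub[OF po2], simp add: Q2_def)+
    apply (hypsubst, rule exI, rule l2_01)
    done
next
  fix p assume "p \<in> Q2" then show "{p} \<in> Ua" by (auto simp: Ua_def Q2_def)
qed

lemma jsb: "join_spec Q2 r2 Ub"
  unfolding join_spec_def join_exists_def
proof (intro conjI ballI)
  show "Ub \<subseteq> Pow Q2" by (simp add: Ub_def Q2_def)
  fix S assume "S \<in> Ub"
  then show "\<exists>x. is_lub Q2 r2 S x" unfolding Ub_def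
    apply (elim insertE emptyE)
    apply (hypsubst, rule exI, rule single_lub[OF po2], simp add: Q2_def)+
    apply (hypsubst, rule exI, rule l2_32)
    done
next
  fix p assume "p \<in> Q2" then show "{p} \<in> Ub" by (auto simp: Ub_def Q2_def)
qed

lemma Ca: "condC Q2 r2 Ua"
  apply (rule condC_suff[OF po2 jsa])
  apply (simp only: Ua_def j2_01 join_single[OF po2] q2mem ball_simps bex_simps)
  apply (simp add: Q2_def r2_def)
  done

lemma Cb: "condC Q2 r2 Ub"
  apply (rule condC_suff[OF po2 jsb])
  apply (simp only: Ub_def j2_32 join_single[OF po2] q2mem ball_simps bex_simps)
  apply (simp add: Q2_def r2_def)
  done

lemma j2_01s: "join Q2 r2 {0, Suc 0} = 3" using j2_01 by simp

lemma not_plus_a: "{0,1,2} \<notin> U_plus Q2 r2 Ua"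
proof
  assume "{0,1,2} \<in> U_plus Q2 r2 Ua"
  then have "join Q2 r2 {0,1,2} \<in> Gamma Q2 r2 Ua {0,1,2}" unfolding U_plus_def mem_Collect_eq by (elim conjE)
  then have z: "4 \<in> Gamma Q2 r2 Ua {0,1,2}" unfolding j2_012 .
  have id: "U_ideal Q2 r2 Ua {0,1,2,3}" unfolding U_ideal_def
  proof (intro conjI ballI impI)
    show "{0,1,2,3} \<subseteq> Q2" by (simp add: Q2_def)
    fix x y assume "x \<in> {0::nat,1,2,3}" "y \<in> Q2" "(y, x) \<in> r2"
    then show "y \<in> {0,1,2,3}" by (auto simp: Q2_def r2_def)
  next
    fix S assume S: "S \<in> Ua" "S \<subseteq> {0::nat,1,2,3}"
    then show "join Q2 r2 S \<in> {0,1,2,3}" unfolding Ua_def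
      apply (elim insertE emptyE)
      apply (simp_all add: join_single[OF po2] q2mem j2_01 j2_01s)
      done
  qed
  have "Gamma Q2 r2 Ua {0,1,2} \<subseteq> {0,1,2,3}" by (rule Gamma_least[OF id]) auto
  then have "(4::nat) \<in> {0,1,2,3}" using z by (rule subsetD)
  then show False by simp
qed

lemma not_plus_b: "{0,1,2} \<notin> U_plus Q2 r2 Ub"
proof
  assume "{0,1,2} \<in> U_plus Q2 r2 Ub"
  then have "join Q2 r2 {0,1,2} \<in> Gamma Q2 r2 Ub {0,1,2}" unfolding U_plus_def mem_Collect_eq by (elim conjE)
  then have z: "4 \<in> Gamma Q2 r2 Ub {0,1,2}" unfolding j2_012 .
  have id: "U_ideal Q2 r2 Ub {0,1,2}" unfolding U_ideal_def
  proof (intro conjI ballI impI)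
    show "{0,1,2} \<subseteq> Q2" by (simp add: Q2_def)
    fix x y assume "x \<in> {0::nat,1,2}" "y \<in> Q2" "(y, x) \<in> r2"
    then show "y \<in> {0,1,2}" by (auto simp: Q2_def r2_def)
  next
    fix S assume S: "S \<in> Ub" "S \<subseteq> {0::nat,1,2}"
    then show "join Q2 r2 S \<in> {0,1,2}" unfolding Ub_def
      apply (elim insertE emptyE)
      apply (simp_all add: join_single[OF po2] q2mem)
      done
  qed
  have "Gamma Q2 r2 Ub {0,1,2} \<subseteq> {0,1,2}" by (rule Gamma_least[OF id]) auto
  then have "(4::nat) \<in> {0,1,2}" using z by (rule subsetD)
  then show False by simp
qed

lemma in_plus_union: "{0,1,2} \<in> U_plus Q2 r2 (U_plus Q2 r2 Ua \<union> U_plus Q2 r2 Ub)"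
proof -
  have jsab: "join_spec Q2 r2 (Ua \<union> Ub)" by (rule js_Un[OF jsa jsb])
  let ?G = "Gamma Q2 r2 (Ua \<union> Ub) {0,1,2}"
  have SP: "{0,1,2} \<subseteq> Q2" by (simp add: Q2_def)
  have s: "{0,1,2} \<subseteq> ?G" by (rule Gamma_sub)
  have "{0,1} \<in> Ua \<union> Ub" by (simp add: Ua_def)
  moreover have "{0,1} \<subseteq> ?G" using s by (rule subset_trans[rotated]) auto
  ultimately have "join Q2 r2 {0,1} \<in> ?G" by (rule Gamma_join[OF po2 jsab SP])
  then have g3: "3 \<in> ?G" unfolding j2_01 .
  have "{3,2} \<in> Ua \<union> Ub" by (simp add: Ub_def)
  moreover have "{3,2} \<subseteq> ?G" using s g3 by auto
  ultimately have "join Q2 r2 {3,2} \<in> ?G" by (rule Gamma_join[OF po2 jsab SP])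
  then have g4: "4 \<in> ?G" unfolding j2_32 .
  have sub: "Ua \<union> Ub \<subseteq> U_plus Q2 r2 Ua \<union> U_plus Q2 r2 Ub"
    by (rule Un_mono[OF U_sub_plus[OF po2 jsa] U_sub_plus[OF po2 jsb]])
  have "4 \<in> Gamma Q2 r2 (U_plus Q2 r2 Ua \<union> U_plus Q2 r2 Ub) {0,1,2}"
    by (rule subsetD[OF Gamma_mono_U[OF sub] g4])
  then show ?thesis unfolding U_plus_def join_exists_def j2_012 mem_Collect_eq
    by (intro conjI SP exI[of _ 4] l2_012)
qed

lemma not_max2: "\<not> maximal_js Q2 r2 (U_plus Q2 r2 Ua \<union> U_plus Q2 r2 Ub)"
proof
  assume "maximal_js Q2 r2 (U_plus Q2 r2 Ua \<union> U_plus Q2 r2 Ub)"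
  then have eq: "U_plus Q2 r2 Ua \<union> U_plus Q2 r2 Ub = U_plus Q2 r2 (U_plus Q2 r2 Ua \<union> U_plus Q2 r2 Ub)"
    unfolding maximal_js_def .
  have "{0,1,2} \<in> U_plus Q2 r2 Ua \<union> U_plus Q2 r2 Ub" by (subst eq) (rule in_plus_union)
  then show False using not_plus_a not_plus_b by blast
qed

theorem theorem4p6:
  shows "(\<forall>(P :: 'a set) r (I :: 'i set) Us.
            partial_order_on P r \<and> I \<noteq> {} \<and>
            (\<forall>i\<in>I. join_spec P r (Us i) \<and> frame_generating P r (Us i))
          \<longrightarrow> join_spec P r (\<Union>i\<in>I. Us i) \<and> frame_generating P r (\<Union>i\<in>I. Us i))
       \<and> (\<exists>(Q :: nat set) r U1 U2.
            partial_order_on Q r \<and>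
            join_spec Q r U1 \<and> maximal_js Q r U1 \<and> frame_generating Q r U1 \<and>
            join_spec Q r U2 \<and> maximal_js Q r U2 \<and> frame_generating Q r U2 \<and>
            \<not> maximal_js Q r (U1 \<union> U2))
       \<and> (\<forall>(P :: 'a set) r (I :: 'i set) Us.
            partial_order_on P r \<and> I \<noteq> {} \<and>
            (\<forall>i\<in>I. join_spec P r (Us i) \<and> maximal_js P r (Us i) \<and> frame_generating P r (Us i))
          \<longrightarrow> join_spec P r (\<Inter>i\<in>I. Us i) \<and> maximal_js P r (\<Inter>i\<in>I. Us i)
              \<and> frame_generating P r (\<Inter>i\<in>I. Us i))
       \<and> (\<exists>(Q :: nat set) r U1 U2.
            partial_order_on Q r \<and>
            join_spec Q r U1 \<and> frame_generating Q r U1 \<and>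
            join_spec Q r U2 \<and> frame_generating Q r U2 \<and>
            \<not> frame_generating Q r (U1 \<inter> U2))"
proof (intro conjI)
  show "\<forall>(P :: 'a set) r (I :: 'i set) Us.
            partial_order_on P r \<and> I \<noteq> {} \<and>
            (\<forall>i\<in>I. join_spec P r (Us i) \<and> frame_generating P r (Us i))
          \<longrightarrow> join_spec P r (\<Union>i\<in>I. Us i) \<and> frame_generating P r (\<Union>i\<in>I. Us i)"
  proof (intro allI impI)
    fix P :: "'a set" and r and I :: "'i set" and Us
    assume h: "partial_order_on P r \<and> I \<noteq> {} \<and>
            (\<forall>i\<in>I. join_spec P r (Us i) \<and> frame_generating P r (Us i))"
    have po: "partial_order_on P r" using h by (rule conjunct1)
    have I: "I \<noteq> {}" by (rule conjunct1[OF conjunct2[OF h]])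
    have H: "\<forall>i\<in>I. join_spec P r (Us i) \<and> frame_generating P r (Us i)" by (rule conjunct2[OF conjunct2[OF h]])
    show "join_spec P r (\<Union>i\<in>I. Us i) \<and> frame_generating P r (\<Union>i\<in>I. Us i)"
      by (rule part1[OF po I H])
  qed
next
  show "\<forall>(P :: 'a set) r (I :: 'i set) Us.
            partial_order_on P r \<and> I \<noteq> {} \<and>
            (\<forall>i\<in>I. join_spec P r (Us i) \<and> maximal_js P r (Us i) \<and> frame_generating P r (Us i))
          \<longrightarrow> join_spec P r (\<Inter>i\<in>I. Us i) \<and> maximal_js P r (\<Inter>i\<in>I. Us i)
              \<and> frame_generating P r (\<Inter>i\<in>I. Us i)"
  proof (intro allI impI)
    fix P :: "'a set" and r and I :: "'i set" and Us
    assume h: "partial_order_on P r \<and> I \<noteq> {} \<and>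
            (\<forall>i\<in>I. join_spec P r (Us i) \<and> maximal_js P r (Us i) \<and> frame_generating P r (Us i))"
    have po: "partial_order_on P r" using h by (rule conjunct1)
    have I: "I \<noteq> {}" by (rule conjunct1[OF conjunct2[OF h]])
    have H: "\<forall>i\<in>I. join_spec P r (Us i) \<and> maximal_js P r (Us i) \<and> frame_generating P r (Us i)"
      by (rule conjunct2[OF conjunct2[OF h]])
    show "join_spec P r (\<Inter>i\<in>I. Us i) \<and> maximal_js P r (\<Inter>i\<in>I. Us i)
              \<and> frame_generating P r (\<Inter>i\<in>I. Us i)"
      by (rule part3[OF po I H])
  qed
next
  have fa: "frame_generating Q2 r2 (U_plus Q2 r2 Ua)"
    using plus_fg[OF po2 jsa] condC_frame[OF po2 jsa Ca] by simp
  have fb: "frame_generating Q2 r2 (U_plus Q2 r2 Ub)"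
    using plus_fg[OF po2 jsb] condC_frame[OF po2 jsb Cb] by simp
  show "\<exists>(Q :: nat set) r U1 U2.
            partial_order_on Q r \<and>
            join_spec Q r U1 \<and> maximal_js Q r U1 \<and> frame_generating Q r U1 \<and>
            join_spec Q r U2 \<and> maximal_js Q r U2 \<and> frame_generating Q r U2 \<and>
            \<not> maximal_js Q r (U1 \<union> U2)"
    apply (rule exI[of _ Q2], rule exI[of _ r2], rule exI[of _ "U_plus Q2 r2 Ua"], rule exI[of _ "U_plus Q2 r2 Ub"])
    apply (intro conjI po2 plus_join_spec[OF po2 jsa] plus_maximal[OF po2 jsa] fa
        plus_join_spec[OF po2 jsb] plus_maximal[OF po2 jsb] fb not_max2)
    done
next
  have f1: "frame_generating Q4 r4 U41" by (rule condC_frame[OF po4 js41 C41])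
  have f2: "frame_generating Q4 r4 U42" by (rule condC_frame[OF po4 js42 C42])
  have nf: "\<not> frame_generating Q4 r4 (U41 \<inter> U42)"
    using frame_condC[OF po4 js_Int[OF js41 js42]] notC4 by blast
  show "\<exists>(Q :: nat set) r U1 U2.
            partial_order_on Q r \<and>
            join_spec Q r U1 \<and> frame_generating Q r U1 \<and>
            join_spec Q r U2 \<and> frame_generating Q r U2 \<and>
            \<not> frame_generating Q r (U1 \<inter> U2)"
    apply (rule exI[of _ Q4], rule exI[of _ r4], rule exI[of _ U41], rule exI[of _ U42])
    apply (intro conjI po4 js41 js42 f1 f2 nf)
    done
qed

end
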